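(* Let $\phi\colon\Gamma\to X$ be a partial flow on a metric space $X$. Let $U\subset X$ be a $\phi$-convex open set with compact closure, and let $\psi=\phi|U$ be the restriction of $\phi$ to $U$. Then the enveloping space $U^e$ of $\psi$ is metrizable.
   Context: A partial flow on a metric space $X$ is a continuous map $\phi\colon\Gamma\to X$ on an open set $\Gamma\subset\mathbb{R}\times X$. It satisfies: $\Gamma_x=\{t:(t,x)\in\Gamma\}$ is a connected set containing $0$; $\Gamma_{\phi_t(x)}=\Gamma_x-t$; $\phi_0=\mathrm{id}$; and $\phi_s\phi_t(x)=\phi_{s+t}(x)$ whenever $s,t,s+t\in\Gamma_x$. Let $J(t)=[0,t]$ if $t\ge0$ and $J(t)=[t,0]$ if $t<0$. For open $U\subset X$, the restriction $\psi=\phi|U$ is the partial flow on $U$ with domain $\Gamma_U=\{(t,x): x\in U,\ J(t)\subset\Gamma_x,\ \phi_{J(t)}(x)\subset U\}$ and $\psi_t(x)=\phi_t(x)$. An open set $U$ is $\phi$-convex if, whenever $t\ge0$, $x\in U$, $\phi_t(x)\in U$ and $\phi_{[0,t]}(x)\subset\overline U$, we have $\phi_{[0,t]}(x)\subset U$. The enveloping space of a partial flow $\psi$ on $U$ is the quotient $U^e=(\mathbb{R}\times U)/\!\sim$ with the quotient topology. Here $\sim$ is the equivalence relation generated by $(r,x)\sim(s,y)$ when $r-s\in\Gamma^\psi_x$ and $y=\psi_{r-s}(x)$. The enveloping flow is induced on $U^e$ by $(s,x)\mapsto(s+t,x)$. *)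

theory Defs
  imports "HOL-Analysis.Analysis"
begin

definition fibre :: "(real \<times> 'a) set \<Rightarrow> 'a \<Rightarrow> real set" where
  "fibre \<Gamma> x = {t. (t, x) \<in> \<Gamma>}"

definition partial_flow :: "(real \<times> 'a::metric_space) set \<Rightarrow> (real \<Rightarrow> 'a \<Rightarrow> 'a) \<Rightarrow> bool" where
  "partial_flow \<Gamma> \<phi> \<longleftrightarrow>
     open \<Gamma> \<and>
     continuous_on \<Gamma> (\<lambda>(t, x). \<phi> t x) \<and>
     (\<forall>x. connected (fibre \<Gamma> x) \<and> 0 \<in> fibre \<Gamma> x) \<and>
     (\<forall>x t. t \<in> fibre \<Gamma> x \<longrightarrow> fibre \<Gamma> (\<phi> t x) = (\<lambda>s. s - t) ` fibre \<Gamma> x) \<and>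
     (\<forall>x. \<phi> 0 x = x) \<and>
     (\<forall>x s t. s \<in> fibre \<Gamma> x \<and> t \<in> fibre \<Gamma> x \<and> s + t \<in> fibre \<Gamma> x
              \<longrightarrow> \<phi> s (\<phi> t x) = \<phi> (s + t) x)"

definition J :: "real \<Rightarrow> real set" where
  "J t = (if t \<ge> 0 then {0..t} else {t..0})"

definition restr_domain :: "(real \<times> 'a) set \<Rightarrow> (real \<Rightarrow> 'a \<Rightarrow> 'a) \<Rightarrow> 'a set \<Rightarrow> (real \<times> 'a) set" where
  "restr_domain \<Gamma> \<phi> U = {(t, x). x \<in> U \<and> J t \<subseteq> fibre \<Gamma> x \<and> (\<lambda>s. \<phi> s x) ` J t \<subseteq> U}"

text \<open>phi-convexity of an open set U (the orbit segment phi_[0,t](x) is only defined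
  when [0,t] lies in the fibre, which is made explicit).\<close>
definition phi_convex :: "(real \<times> 'a::metric_space) set \<Rightarrow> (real \<Rightarrow> 'a \<Rightarrow> 'a) \<Rightarrow> 'a set \<Rightarrow> bool" where
  "phi_convex \<Gamma> \<phi> U \<longleftrightarrow> open U \<and>
     (\<forall>t x. t \<ge> 0 \<and> x \<in> U \<and> {0..t} \<subseteq> fibre \<Gamma> x \<and> \<phi> t x \<in> U \<and> (\<lambda>s. \<phi> s x) ` {0..t} \<subseteq> closure U
            \<longrightarrow> (\<lambda>s. \<phi> s x) ` {0..t} \<subseteq> U)"

definition env_gen :: "(real \<times> 'a) set \<Rightarrow> (real \<Rightarrow> 'a \<Rightarrow> 'a) \<Rightarrow> 'a set
                      \<Rightarrow> real \<times> 'a \<Rightarrow> real \<times> 'a \<Rightarrow> bool" where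
  "env_gen \<Gamma>\<psi> \<psi> U p q \<longleftrightarrow> snd p \<in> U \<and> snd q \<in> U \<and>
     fst p - fst q \<in> fibre \<Gamma>\<psi> (snd p) \<and> snd q = \<psi> (fst p - fst q) (snd p)"

definition env_space :: "(real \<times> 'a) set \<Rightarrow> (real \<Rightarrow> 'a \<Rightarrow> 'a) \<Rightarrow> 'a set \<Rightarrow> (real \<times> 'a) set set" where
  "env_space \<Gamma>\<psi> \<psi> U = (\<lambda>p. Collect (equivclp (env_gen \<Gamma>\<psi> \<psi> U) p)) ` (UNIV \<times> U)"

definition env_topology :: "(real \<times> 'a::topological_space) set \<Rightarrow> (real \<Rightarrow> 'a \<Rightarrow> 'a) \<Rightarrow> 'a set
                           \<Rightarrow> (real \<times> 'a) set topology" where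
  "env_topology \<Gamma>\<psi> \<psi> U = topology (\<lambda>S. S \<subseteq> env_space \<Gamma>\<psi> \<psi> U \<and>
        openin (subtopology euclidean (UNIV \<times> U)) (\<Union>S))"

end

theory Submission
  imports Defs
begin

lemma regular_closure_sub:
  assumes "regular_space X" "openin X W" "x \<in> W"
  obtains V where "openin X V" "x \<in> V" "X closure_of V \<subseteq> W"
proof -
  have "closedin X (topspace X - W)" using assms by blast
  moreover have "x \<in> topspace X - (topspace X - W)" using assms openin_subset by fastforce
  ultimately obtain V where V: "openin X V" "x \<in> V" "disjnt (topspace X - W) (X closure_of V)"
    using assms(1) unfolding regular_space by blast
  have c: "X closure_of V \<subseteq> topspace X" by (rule closure_of_subset_topspace)
  have cW: "X closure_of V \<subseteq> W"
  proof
    fix z assume "z \<in> X closure_of V"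
    with c V(3) show "z \<in> W" unfolding disjnt_def by blast
  qed
  show ?thesis by (rule that[OF V(1,2) cW])
qed

lemma urysohn_metrization:
  assumes sc: "second_countable X" and reg: "regular_space X" and hd: "Hausdorff_space X"
  shows "metrizable_space X"
proof -
  from sc obtain \<B> where B0: "countable \<B> \<and> (\<forall>V \<in> \<B>. openin X V) \<and>
             (\<forall>U x. openin X U \<and> x \<in> U \<longrightarrow> (\<exists>V \<in> \<B>. x \<in> V \<and> V \<subseteq> U))"
    unfolding second_countable_def by (elim exE)
  have cB: "countable \<B>" using B0 by simp
  have oB: "\<And>V. V \<in> \<B> \<Longrightarrow> openin X V" using B0 by simp
  have bB: "\<And>W x. openin X W \<Longrightarrow> x \<in> W \<Longrightarrow> \<exists>V \<in> \<B>. x \<in> V \<and> V \<subseteq> W"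
    using B0 by simp
  have nor: "normal_space X"
    by (simp add: reg regular_Lindelof_imp_normal_space sc second_countable_imp_Lindelof_space)
  define I where "I = {(A,B). A \<in> \<B> \<and> B \<in> \<B> \<and> X closure_of A \<subseteq> B}"
  have cI: "countable I"
  proof -
    have "I \<subseteq> \<B> \<times> \<B>" by (auto simp: I_def)
    then show ?thesis by (rule countable_subset) (simp add: cB)
  qed
  have "\<exists>f. continuous_map X (top_of_set {0..1}) f \<and> f ` (X closure_of fst i) \<subseteq> {0}
          \<and> f ` (topspace X - snd i) \<subseteq> {1::real}" if "i \<in> I" for i
  proof -
    obtain A B where i: "i = (A,B)" "A \<in> \<B>" "B \<in> \<B>" "X closure_of A \<subseteq> B"
      using \<open>i \<in> I\<close> by (auto simp: I_def)
    have "closedin X (topspace X - B)" using oB[OF i(3)] by blast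
    moreover have "disjnt (X closure_of A) (topspace X - B)" using i(4) by (auto simp: disjnt_def)
    ultimately obtain g where "continuous_map X (top_of_set {0..1}) g"
       "g ` (X closure_of A) \<subseteq> {0}" "g ` (topspace X - B) \<subseteq> {1::real}"
      using Urysohn_lemma[OF nor, of "X closure_of A" "topspace X - B" 0 1] by auto
    then show ?thesis using i(1) by auto
  qed
  then obtain f where f: "\<And>i. i \<in> I \<Longrightarrow> continuous_map X (top_of_set {0..1}) (f i) \<and>
       f i ` (X closure_of fst i) \<subseteq> {0} \<and> f i ` (topspace X - snd i) \<subseteq> {1::real}"
    by metis
  define Y where "Y = (\<lambda>i. if i \<in> I then top_of_set {0..1::real} else top_of_set {0})"
  define F where "F = (\<lambda>x i. if i \<in> I then f i x else 0)"
  define P where "P = product_topology Y UNIV"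
  have contF: "continuous_map X P F"
    unfolding P_def continuous_map_componentwise_UNIV
  proof
    fix k show "continuous_map X (Y k) (\<lambda>x. F x k)"
      using f[of k] by (auto simp: Y_def F_def continuous_map_in_subtopology)
  qed
  have metP: "metrizable_space P"
    unfolding P_def metrizable_space_product_topology
  proof (intro disjI2 conjI)
    have "{i \<in> UNIV. \<not> (\<exists>a. topspace (Y i) \<subseteq> {a})} \<subseteq> I"
      by (auto simp: Y_def)
    then show "countable {i \<in> UNIV. \<not> (\<exists>a. topspace (Y i) \<subseteq> {a})}"
      by (rule countable_subset) (rule cI)
    show "\<forall>i\<in>UNIV. metrizable_space (Y i)"
    proof
      fix i :: "'a set \<times> 'a set"
      have m: "metrizable_space (top_of_set (S::real set))" for S
        by (rule metrizable_space_subtopology[OF metrizable_space_euclidean])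
      show "metrizable_space (Y i)" unfolding Y_def by (simp add: m)
    qed
  qed
  have key: "\<exists>i \<in> I. F x i = 0 \<and> (\<forall>z \<in> topspace X. F z i < 1 \<longrightarrow> z \<in> W)"
    if hW: "openin X W" "x \<in> W" for W x
  proof -
    obtain B where B: "B \<in> \<B>" "x \<in> B" "B \<subseteq> W" using bB[OF hW] by (elim bexE conjE)
    obtain V where V: "openin X V" "x \<in> V" "X closure_of V \<subseteq> B"
      using regular_closure_sub[OF reg oB[OF B(1)] B(2)] by metis
    obtain A where A: "A \<in> \<B>" "x \<in> A" "A \<subseteq> V" using bB[OF V(1,2)] by (elim bexE conjE)
    have "X closure_of A \<subseteq> B"
      using V(3) closure_of_mono[OF A(3)] by (rule order_trans[rotated])
    then have iI: "(A,B) \<in> I" using A(1) B(1) by (simp add: I_def)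
    have xc: "x \<in> X closure_of A"
    proof -
      have "A \<subseteq> topspace X" using oB[OF A(1)] by (rule openin_subset)
      then have "A \<subseteq> X closure_of A" by (rule closure_of_subset)
      then show ?thesis using A(2) by (rule subsetD)
    qed
    show ?thesis
    proof (intro bexI[OF _ iI] conjI ballI impI)
      show "F x (A,B) = 0" using f[OF iI] xc by (auto simp: F_def)
      fix z assume z: "z \<in> topspace X" "F z (A, B) < 1"
      show "z \<in> W"
      proof (rule ccontr)
        assume "z \<notin> W"
        then have "z \<in> topspace X - B" using z B by auto
        then have "f (A,B) z = 1" using f[OF iI] by auto
        then show False using z iI by (auto simp: F_def)
      qed
    qed
  qed
  define Z where "Z = subtopology P (F ` topspace X)"
  have hom: "homeomorphic_map X Z F"
  proof (rule bijective_open_imp_homeomorphic_map)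
    show "continuous_map X Z F"
      unfolding Z_def using contF by (simp add: continuous_map_in_subtopology)
    show "F ` topspace X = topspace Z"
      unfolding Z_def using contF continuous_map_image_subset_topspace by fastforce
    show "inj_on F (topspace X)"
    proof
      fix x y assume xy: "x \<in> topspace X" "y \<in> topspace X" "F x = F y"
      show "x = y"
      proof (rule ccontr)
        assume "x \<noteq> y"
        then obtain W W' where "openin X W" "openin X W'" "x \<in> W" "y \<in> W'" "disjnt W W'"
          using hd xy unfolding Hausdorff_space_def by blast
        then have W: "openin X W" "x \<in> W" "y \<notin> W" by (auto simp: disjnt_def)
        obtain i where "i \<in> I" "F x i = 0" "\<forall>z \<in> topspace X. F z i < 1 \<longrightarrow> z \<in> W"
          using key[OF W(1,2)] by blast
        then show False using xy W by (metis zero_less_one)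
      qed
    qed
    show "open_map X Z F"
      unfolding open_map_def
    proof (intro allI impI)
      fix W assume W: "openin X W"
      show "openin Z (F ` W)"
      proof (subst openin_subopen, intro ballI)
        fix y assume "y \<in> F ` W"
        then obtain x where x: "x \<in> W" "y = F x" by blast
        obtain i where i: "i \<in> I" "F x i = 0" "\<forall>z \<in> topspace X. F z i < 1 \<longrightarrow> z \<in> W"
          using key[OF W x(1)] by blast
        define Op where "Op = {g \<in> topspace Z. g i \<in> {..<1}}"
        have "openin Z Op"
        proof -
          have "continuous_map Z euclideanreal (\<lambda>g. g i)"
          proof -
            have "continuous_map P (Y i) (\<lambda>g. g i)"
              unfolding P_def by (rule continuous_map_product_projection) simp
            then have "continuous_map P euclideanreal (\<lambda>g. g i)"
              using continuous_map_in_subtopology by (auto simp: Y_def split: if_splits)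
            then show ?thesis unfolding Z_def by (rule continuous_map_from_subtopology)
          qed
          then show ?thesis unfolding Op_def
            by (rule openin_continuous_map_preimage) simp
        qed
        moreover have "y \<in> Op"
        proof -
          have "x \<in> topspace X" using x(1) W openin_subset by blast
          then have "y \<in> topspace Z" using x(2) \<open>F ` topspace X = topspace Z\<close> by blast
          then show ?thesis using x(2) i(2) by (simp add: Op_def)
        qed
        moreover have "Op \<subseteq> F ` W"
        proof
          fix g assume "g \<in> Op"
          then have g: "g \<in> topspace Z" "g i < 1" by (auto simp: Op_def)
          then obtain z where "z \<in> topspace X" "g = F z"
            using \<open>F ` topspace X = topspace Z\<close> by (metis imageE)
          with g have "z \<in> topspace X" "g = F z" "F z i < 1" by auto
          then show "g \<in> F ` W" using i by blast
        qed
        ultimately show "\<exists>T. openin Z T \<and> y \<in> T \<and> T \<subseteq> F ` W" by blast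
      qed
    qed
  qed
  then have "X homeomorphic_space Z"
    using homeomorphic_map_imp_homeomorphic_space by blast
  moreover have "metrizable_space Z"
    unfolding Z_def by (rule metrizable_space_subtopology[OF metP])
  ultimately show ?thesis using homeomorphic_metrizable_space by blast
qed

lemma fibre_open:
  assumes "open \<Gamma>" shows "open (fibre \<Gamma> x)"
proof -
  have "fibre \<Gamma> x = (\<lambda>t. (t, x)) -` \<Gamma>" by (auto simp: fibre_def)
  moreover have "open ((\<lambda>t::real. (t, x)) -` \<Gamma>)"
    by (rule continuous_open_vimage[OF assms]) (intro continuous_intros)
  ultimately show ?thesis by simp
qed

context
  fixes \<Gamma> :: "(real \<times> 'a::metric_space) set" and \<phi> :: "real \<Rightarrow> 'a \<Rightarrow> 'a"
  assumes pf: "partial_flow \<Gamma> \<phi>"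
begin

lemma pf_open: "open \<Gamma>" using pf by (simp add: partial_flow_def)
lemma pf_cont: "continuous_on \<Gamma> (\<lambda>(t, x). \<phi> t x)" using pf by (simp add: partial_flow_def)
lemma pf_conn: "connected (fibre \<Gamma> x)" using pf by (simp add: partial_flow_def)
lemma pf_zero: "0 \<in> fibre \<Gamma> x" using pf by (simp add: partial_flow_def)
lemma pf_zeroG: "(0, x) \<in> \<Gamma>" using pf_zero by (simp add: fibre_def)
lemma pf_shift: "t \<in> fibre \<Gamma> x \<Longrightarrow> fibre \<Gamma> (\<phi> t x) = (\<lambda>s. s - t) ` fibre \<Gamma> x"
  using pf by (simp add: partial_flow_def)
lemma pf_id: "\<phi> 0 x = x" using pf by (simp add: partial_flow_def)
lemma pf_weak: "s \<in> fibre \<Gamma> x \<Longrightarrow> t \<in> fibre \<Gamma> x \<Longrightarrow> s + t \<in> fibre \<Gamma> x \<Longrightarrow> \<phi> s (\<phi> t x) = \<phi> (s + t) x"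
  using pf unfolding partial_flow_def by blast
lemma pf_fopen: "open (fibre \<Gamma> x)" by (rule fibre_open[OF pf_open])

lemma pf_shift_mem: "t \<in> fibre \<Gamma> x \<Longrightarrow> s \<in> fibre \<Gamma> (\<phi> t x) \<longleftrightarrow> s + t \<in> fibre \<Gamma> x"
  using pf_shift by force

lemma pf_orbit_cont: "continuous_on (fibre \<Gamma> x) (\<lambda>t. \<phi> t x)"
proof -
  have "continuous_on (fibre \<Gamma> x) ((\<lambda>(t, x). \<phi> t x) \<circ> (\<lambda>t. (t, x)))"
    by (rule continuous_on_compose) (auto intro!: continuous_intros continuous_on_subset[OF pf_cont] simp: fibre_def)
  then show ?thesis by (simp add: o_def)
qed

lemma pf_interval: "is_interval (fibre \<Gamma> x)"
  using pf_conn is_interval_connected_1 by blast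

lemma pf_strong:
  assumes t: "t \<in> fibre \<Gamma> x" and st: "s + t \<in> fibre \<Gamma> x"
  shows "\<phi> s (\<phi> t x) = \<phi> (s + t) x"
proof -
  define y where "y = \<phi> t x"
  define G where "G = fibre \<Gamma> y"
  define T where "T = {s \<in> G. \<phi> s y = \<phi> (s + t) x}"
  have memG: "\<And>s. s \<in> G \<longleftrightarrow> s + t \<in> fibre \<Gamma> x"
    unfolding G_def y_def using pf_shift_mem[OF t] .
  have cG: "connected G" unfolding G_def by (rule pf_conn)
  have oG: "open G" unfolding G_def by (rule pf_fopen)
  have "closedin (top_of_set G) T"
  proof -
    have c1: "continuous_on G (\<lambda>s. \<phi> s y)" unfolding G_def by (rule pf_orbit_cont)
    have c2: "continuous_on G (\<lambda>s. \<phi> (s + t) x)"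
    proof -
      have "continuous_on G ((\<lambda>u. \<phi> u x) \<circ> (\<lambda>s. s + t))"
        by (rule continuous_on_compose) (auto intro!: continuous_intros continuous_on_subset[OF pf_orbit_cont] simp: memG)
      then show ?thesis by (simp add: o_def)
    qed
    have "closedin (top_of_set G) {s \<in> topspace (top_of_set G). \<phi> s y = \<phi> (s + t) x}"
      by (rule closedin_continuous_maps_eq[OF Hausdorff_space_euclidean])
         (use c1 c2 in \<open>auto simp: continuous_map_iff_continuous\<close>)
    then show ?thesis by (simp add: T_def)
  qed
  moreover have "openin (top_of_set G) T"
  proof -
    have "open T"
      unfolding open_contains_ball
    proof
      fix s0 assume "s0 \<in> T"
      then have s0G: "s0 \<in> G" and eq0: "\<phi> s0 y = \<phi> (s0 + t) x" by (auto simp: T_def)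
      have "open (G \<inter> fibre \<Gamma> x)" using oG pf_fopen by blast
      moreover have "0 \<in> G \<inter> fibre \<Gamma> x" using pf_zero G_def by blast
      ultimately obtain e1 where e1: "e1 > 0" "ball 0 e1 \<subseteq> G \<inter> fibre \<Gamma> x"
        using open_contains_ball by blast
      obtain e2 where e2: "e2 > 0" "ball s0 e2 \<subseteq> G"
        using oG s0G open_contains_ball by blast
      have bT: "ball s0 (min e1 e2) \<subseteq> T"
        proof
          fix s assume s: "s \<in> ball s0 (min e1 e2)"
          define h where "h = s - s0"
          have hb: "h \<in> ball 0 e1" using s by (simp add: h_def dist_real_def)
          have sG: "s \<in> G" using s e2 by auto
          have hG: "h \<in> G" and hx: "h \<in> fibre \<Gamma> x" using hb e1 by auto
          have s0x: "s0 + t \<in> fibre \<Gamma> x" using s0G memG by blast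
          have sx: "s + t \<in> fibre \<Gamma> x" using sG memG by blast
          have "\<phi> s y = \<phi> (h + s0) y" by (simp add: h_def)
          also have "\<dots> = \<phi> h (\<phi> s0 y)"
            using pf_weak[of h y s0] hG s0G sG unfolding G_def h_def by simp
          also have "\<dots> = \<phi> h (\<phi> (s0 + t) x)" by (simp add: eq0)
          also have "\<dots> = \<phi> (h + (s0 + t)) x"
            using pf_weak[of h x "s0 + t"] hx s0x sx by (simp add: h_def)
          also have "\<dots> = \<phi> (s + t) x" by (simp add: h_def)
          finally show "s \<in> T" using sG by (simp add: T_def)
        qed
      show "\<exists>e>0. ball s0 e \<subseteq> T"
        using e1 e2 bT by (intro exI[of _ "min e1 e2"]) simp
    qed
    moreover have "T \<subseteq> G" by (auto simp: T_def)
    ultimately show ?thesis by (simp add: openin_open_eq oG)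
  qed
  moreover have "0 \<in> T"
    using memG t pf_id by (simp add: T_def y_def)
  ultimately have "T = G" using cG unfolding connected_clopen by blast
  moreover have "s \<in> G" using memG st by blast
  ultimately show ?thesis by (auto simp: T_def y_def)
qed


lemma J_zero: "J 0 = {0}" by (simp add: J_def)
lemma J_0mem: "0 \<in> J t" by (simp add: J_def)
lemma J_self: "t \<in> J t" by (simp add: J_def)
lemma J_neg: "\<sigma> \<in> J (-t) \<longleftrightarrow> \<sigma> + t \<in> J t" by (auto simp: J_def)
lemma J_add: "\<sigma> \<in> J (t + s) \<Longrightarrow> \<sigma> \<in> J t \<or> \<sigma> - t \<in> J s"
  by (auto simp: J_def split: if_splits)

definition good :: "'a set \<Rightarrow> 'a \<Rightarrow> real \<Rightarrow> bool" where
  "good U x t \<longleftrightarrow> x \<in> U \<and> J t \<subseteq> fibre \<Gamma> x \<and> (\<lambda>s. \<phi> s x) ` J t \<subseteq> U"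

lemma fibre_restr: "t \<in> fibre (restr_domain \<Gamma> \<phi> U) x \<longleftrightarrow> good U x t"
  by (simp add: fibre_def restr_domain_def good_def)

lemma good_mem: "good U x t \<Longrightarrow> t \<in> fibre \<Gamma> x" "good U x t \<Longrightarrow> \<phi> t x \<in> U" "good U x t \<Longrightarrow> x \<in> U"
  using J_self unfolding good_def by blast+

lemma good_refl: "x \<in> U \<Longrightarrow> good U x 0"
  by (simp add: good_def J_zero pf_zero pf_id)

lemma good_sym:
  assumes g: "good U x t"
  shows "good U (\<phi> t x) (-t)" "\<phi> (-t) (\<phi> t x) = x"
proof -
  have tx: "t \<in> fibre \<Gamma> x" using good_mem[OF g] by simp
  have J1: "J t \<subseteq> fibre \<Gamma> x" and J2: "(\<lambda>s. \<phi> s x) ` J t \<subseteq> U" using g by (auto simp: good_def)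
  show "\<phi> (-t) (\<phi> t x) = x"
    using pf_strong[OF tx, of "-t"] pf_zero pf_id by simp
  show "good U (\<phi> t x) (-t)"
    unfolding good_def
  proof (intro conjI subsetI)
    show "\<phi> t x \<in> U" using good_mem[OF g] by simp
    fix \<sigma> assume "\<sigma> \<in> J (-t)"
    then have s: "\<sigma> + t \<in> J t" by (simp add: J_neg)
    then have st: "\<sigma> + t \<in> fibre \<Gamma> x" using J1 by blast
    then show "\<sigma> \<in> fibre \<Gamma> (\<phi> t x)" using pf_shift_mem[OF tx] by simp
  next
    fix z assume "z \<in> (\<lambda>s. \<phi> s (\<phi> t x)) ` J (-t)"
    then obtain \<sigma> where "\<sigma> \<in> J (-t)" and z: "z = \<phi> \<sigma> (\<phi> t x)" by blast
    then have s: "\<sigma> + t \<in> J t" by (simp add: J_neg)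
    then have st: "\<sigma> + t \<in> fibre \<Gamma> x" using J1 by blast
    have "z = \<phi> (\<sigma> + t) x" using z pf_strong[OF tx st] by simp
    then show "z \<in> U" using J2 s by blast
  qed
qed

lemma good_trans:
  assumes g1: "good U x t" and g2: "good U (\<phi> t x) s"
  shows "good U x (t + s)" "\<phi> s (\<phi> t x) = \<phi> (t + s) x"
proof -
  have tx: "t \<in> fibre \<Gamma> x" using good_mem[OF g1] by simp
  have J1: "J t \<subseteq> fibre \<Gamma> x" and J2: "(\<lambda>s. \<phi> s x) ` J t \<subseteq> U" using g1 by (auto simp: good_def)
  have K1: "J s \<subseteq> fibre \<Gamma> (\<phi> t x)" and K2: "(\<lambda>r. \<phi> r (\<phi> t x)) ` J s \<subseteq> U"
    using g2 by (auto simp: good_def)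
  have sy: "s + t \<in> fibre \<Gamma> x" using K1 J_self pf_shift_mem[OF tx] by blast
  show "\<phi> s (\<phi> t x) = \<phi> (t + s) x" using pf_strong[OF tx sy] by (simp add: add.commute)
  have main: "\<sigma> \<in> fibre \<Gamma> x \<and> \<phi> \<sigma> x \<in> U" if "\<sigma> \<in> J (t + s)" for \<sigma>
  proof (cases "\<sigma> \<in> J t")
    case True then show ?thesis using J1 J2 by blast
  next
    case False
    then have a: "\<sigma> - t \<in> J s" using J_add[OF that] by blast
    then have b: "\<sigma> - t \<in> fibre \<Gamma> (\<phi> t x)" using K1 by blast
    then have c: "\<sigma> \<in> fibre \<Gamma> x" using pf_shift_mem[OF tx] by simp
    have "\<phi> (\<sigma> - t) (\<phi> t x) = \<phi> \<sigma> x" using pf_strong[OF tx, of "\<sigma> - t"] c by simp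
    moreover have "\<phi> (\<sigma> - t) (\<phi> t x) \<in> U" using K2 a by blast
    ultimately show ?thesis using c by simp
  qed
  show "good U x (t + s)"
    unfolding good_def using main good_mem(3)[OF g1] by blast
qed

abbreviation "RR U \<equiv> env_gen (restr_domain \<Gamma> \<phi> U) \<phi> U"

lemma RR_iff: "RR U p q \<longleftrightarrow> good U (snd p) (fst p - fst q) \<and> snd q \<in> U \<and> snd q = \<phi> (fst p - fst q) (snd p)"
  by (auto simp: env_gen_def fibre_restr good_def)

lemma RR_refl: "snd p \<in> U \<Longrightarrow> RR U p p"
  by (simp add: RR_iff good_refl pf_id)

lemma RR_sym: "RR U p q \<Longrightarrow> RR U q p"
proof -
  assume r: "RR U p q"
  then have g: "good U (snd p) (fst p - fst q)" and q: "snd q = \<phi> (fst p - fst q) (snd p)"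
    by (auto simp: RR_iff)
  have "fst q - fst p = - (fst p - fst q)" by simp
  then show "RR U q p" using good_sym[OF g] good_mem(3)[OF g] q by (simp add: RR_iff)
qed

lemma RR_trans: "RR U p q \<Longrightarrow> RR U q w \<Longrightarrow> RR U p w"
proof -
  assume r1: "RR U p q" and r2: "RR U q w"
  then have g1: "good U (snd p) (fst p - fst q)" and q: "snd q = \<phi> (fst p - fst q) (snd p)"
    and g2: "good U (snd q) (fst q - fst w)" and w: "snd w = \<phi> (fst q - fst w) (snd q)" "snd w \<in> U"
    by (auto simp: RR_iff)
  have g2': "good U (\<phi> (fst p - fst q) (snd p)) (fst q - fst w)" using g2 q by simp
  have e: "fst p - fst q + (fst q - fst w) = fst p - fst w" by simp
  show "RR U p w" using good_trans[OF g1 g2'] w q e by (simp add: RR_iff)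
qed

lemma RR_U: "RR U p q \<Longrightarrow> snd p \<in> U \<and> snd q \<in> U"
  unfolding env_gen_def by blast

lemma equivclp_RR:
  assumes "snd p \<in> U"
  shows "equivclp (RR U) p q \<longleftrightarrow> RR U p q"
proof
  assume "RR U p q" then show "equivclp (RR U) p q" by (rule r_into_equivclp)
next
  assume "equivclp (RR U) p q"
  then have "(symclp (RR U))\<^sup>*\<^sup>* p q" by (simp add: equivclp_def)
  then show "RR U p q"
  proof (induction rule: rtranclp_induct)
    case base then show ?case using RR_refl assms by blast
  next
    case (step y z)
    from step.hyps(2) have "RR U y z \<or> RR U z y" by (simp add: symclp_def)
    then have "RR U y z" using RR_sym by blast
    then show ?case using RR_trans step.IH by blast
  qed
qed


lemma compact_J: "compact (J t)" by (simp add: J_def)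

lemma phi_vimage_open:
  assumes "open U"
  shows "open ((\<lambda>(t, x). \<phi> t x) -` U \<inter> \<Gamma>)"
  using continuous_on_open_vimage[OF pf_open] pf_cont assms by blast

lemma good_open:
  assumes oU: "open U"
  shows "open {y \<in> U. good U y u}"
  unfolding open_contains_ball
proof
  fix y0 assume "y0 \<in> {y \<in> U. good U y u}"
  then have y0: "y0 \<in> U" "good U y0 u" by auto
  define V where "V = (\<lambda>(t, x). \<phi> t x) -` U \<inter> \<Gamma>"
  have oV: "open V" unfolding V_def by (rule phi_vimage_open[OF oU])
  have cC: "compact (J u \<times> {y0})" by (simp add: compact_J compact_Times)
  have CV: "J u \<times> {y0} \<subseteq> \<Union>{V}"
    using y0(2) by (auto simp: good_def V_def fibre_def)
  obtain e where e: "e > 0" "\<And>c. c \<in> J u \<times> {y0} \<Longrightarrow> \<exists>G\<in>{V}. ball c e \<subseteq> G"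
    using Heine_Borel_lemma[OF cC CV] oV by blast
  obtain e' where e': "e' > 0" "ball y0 e' \<subseteq> U" using oU y0(1) open_contains_ball by blast
  show "\<exists>e>0. ball y0 e \<subseteq> {y \<in> U. good U y u}"
  proof (intro exI conjI)
    show "min e e' > 0" using e e' by simp
    show "ball y0 (min e e') \<subseteq> {y \<in> U. good U y u}"
    proof
      fix y assume y: "y \<in> ball y0 (min e e')"
      then have "y \<in> ball y0 e'" by simp
      then have yU: "y \<in> U" using e'(2) by (rule subsetD[rotated])
      have inV: "(\<tau>, y) \<in> V" if "\<tau> \<in> J u" for \<tau>
      proof -
        have "ball (\<tau>, y0) e \<subseteq> V" using e(2)[of "(\<tau>, y0)"] that by auto
        moreover have "(\<tau>, y) \<in> ball (\<tau>, y0) e" using y by (simp add: dist_Pair_Pair)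
        ultimately show ?thesis by (rule subsetD)
      qed
      have "J u \<subseteq> fibre \<Gamma> y"
      proof
        fix \<tau> assume "\<tau> \<in> J u"
        then have "(\<tau>, y) \<in> \<Gamma>" using inV unfolding V_def by blast
        then show "\<tau> \<in> fibre \<Gamma> y" by (simp add: fibre_def)
      qed
      moreover have "(\<lambda>s. \<phi> s y) ` J u \<subseteq> U"
      proof
        fix z assume "z \<in> (\<lambda>s. \<phi> s y) ` J u"
        then obtain \<tau> where "\<tau> \<in> J u" "z = \<phi> \<tau> y" by blast
        then show "z \<in> U" using inV[of \<tau>] unfolding V_def by simp
      qed
      ultimately have "good U y u" unfolding good_def using yU by blast
      then show "y \<in> {y \<in> U. good U y u}" using yU by simp
    qed
  qed
qed

lemma sat_open:
  assumes oU: "open U" and oW: "open W" and WU: "W \<subseteq> UNIV \<times> U"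
  shows "open {b. \<exists>a\<in>W. RR U a b}"
  apply (subst open_subopen)
proof
  fix b assume "b \<in> {b. \<exists>a\<in>W. RR U a b}"
  then obtain a where aW: "a \<in> W" and ab: "RR U a b" by blast
  have ba: "RR U b a" using RR_sym[OF ab] .
  define u where "u = fst b - fst a"
  have gb: "good U (snd b) u" and sa: "snd a = \<phi> u (snd b)" using ba by (auto simp: RR_iff u_def)
  define O' where "O' = {y \<in> U. good U y u}"
  have oO: "open O'" unfolding O'_def by (rule good_open[OF oU])
  define g where "g = (\<lambda>p::real \<times> 'a. (fst p - u, \<phi> u (snd p)))"
  have cg: "continuous_on (UNIV \<times> O') g"
  proof -
    have c2: "continuous_on (UNIV \<times> O') (\<lambda>p::real \<times> 'a. \<phi> u (snd p))"
    proof -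
      have "continuous_on (UNIV \<times> O') ((\<lambda>(t, x). \<phi> t x) \<circ> (\<lambda>p::real \<times> 'a. (u, snd p)))"
      proof (rule continuous_on_compose)
        show "continuous_on (UNIV \<times> O') (\<lambda>p::real \<times> 'a. (u, snd p))" by (intro continuous_intros)
        have "(\<lambda>p::real \<times> 'a. (u, snd p)) ` (UNIV \<times> O') \<subseteq> \<Gamma>"
          using good_mem(1) by (auto simp: O'_def fibre_def)
        then show "continuous_on ((\<lambda>p::real \<times> 'a. (u, snd p)) ` (UNIV \<times> O')) (\<lambda>(t, x). \<phi> t x)"
          using continuous_on_subset[OF pf_cont] by blast
      qed
      then show ?thesis by (simp add: o_def)
    qed
    show ?thesis unfolding g_def by (intro continuous_intros c2)
  qed
  define V where "V = g -` W \<inter> (UNIV \<times> O')"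
  have oV: "open V" unfolding V_def
    using continuous_on_open_vimage[of "UNIV \<times> O'" g] oO cg oW by (simp add: open_Times)
  have bV: "b \<in> V"
  proof -
    have "g b = a" using sa by (simp add: g_def u_def prod_eq_iff)
    moreover have "snd b \<in> O'" using gb good_mem(3)[OF gb] by (simp add: O'_def)
    ultimately show ?thesis using aW by (auto simp: V_def mem_Times_iff)
  qed
  have "V \<subseteq> {b. \<exists>a\<in>W. RR U a b}"
  proof
    fix b' assume "b' \<in> V"
    then have gW: "g b' \<in> W" and bO: "snd b' \<in> O'" by (auto simp: V_def mem_Times_iff)
    have gd: "good U (snd b') u" using bO by (simp add: O'_def)
    have "RR U b' (g b')"
      unfolding RR_iff using gd good_mem(2)[OF gd] by (simp add: g_def)
    then have "RR U (g b') b'" by (rule RR_sym)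
    then show "b' \<in> {b. \<exists>a\<in>W. RR U a b}" using gW by blast
  qed
  then show "\<exists>T. open T \<and> b \<in> T \<and> T \<subseteq> {b. \<exists>a\<in>W. RR U a b}"
    using oV bV by blast
qed

lemma uniform_delta:
  assumes "compact K"
  obtains \<delta> where "\<delta> > 0" "\<And>z. z \<in> K \<Longrightarrow> \<delta> \<in> fibre \<Gamma> z"
proof -
  have cC: "compact ({0::real} \<times> K)" using assms by (simp add: compact_Times)
  have CV: "{0::real} \<times> K \<subseteq> \<Union>{\<Gamma>}" using pf_zeroG by auto
  obtain e where e: "e > 0" "\<And>c. c \<in> {0::real} \<times> K \<Longrightarrow> \<exists>G\<in>{\<Gamma>}. ball c e \<subseteq> G"
    using Heine_Borel_lemma[OF cC CV] pf_open by blast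
  show ?thesis
  proof (rule that[of "e/2"])
    show "e / 2 > 0" using e by simp
    fix z assume "z \<in> K"
    then have "ball (0, z) e \<subseteq> \<Gamma>" using e(2)[of "(0, z)"] by auto
    moreover have "(e/2, z) \<in> ball (0, z) e" using e by (simp add: dist_Pair_Pair dist_real_def)
    ultimately have "(e/2, z) \<in> \<Gamma>" by (rule subsetD)
    then show "e / 2 \<in> fibre \<Gamma> z" by (simp add: fibre_def)
  qed
qed


lemma closed_RR_pos:
  assumes oU: "open U" and cvx: "phi_convex \<Gamma> \<phi> U" and cK: "compact (closure U)"
    and la: "a \<longlonglongrightarrow> (r, x)" and lb: "b \<longlonglongrightarrow> (s, y)"
    and xU: "x \<in> U" and yU: "y \<in> U"
    and R: "\<And>n. RR U (a n) (b n)" and pos: "r - s \<ge> 0"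
  shows "RR U (r, x) (s, y)"
proof -
  define K where "K = closure U"
  define t where "t = r - s"
  define tn where "tn = (\<lambda>n. fst (a n) - fst (b n))"
  define xn where "xn = (\<lambda>n. snd (a n))"
  define yn where "yn = (\<lambda>n. snd (b n))"
  have clK: "closed K" by (simp add: K_def)
  have UK: "U \<subseteq> K" by (simp add: K_def closure_subset)
  have ltn: "tn \<longlonglongrightarrow> t"
  proof -
    have "(\<lambda>n. fst (a n)) \<longlonglongrightarrow> r" using tendsto_fst[OF la] by simp
    moreover have "(\<lambda>n. fst (b n)) \<longlonglongrightarrow> s" using tendsto_fst[OF lb] by simp
    ultimately show ?thesis unfolding tn_def t_def by (rule tendsto_diff)
  qed
  have lxn: "xn \<longlonglongrightarrow> x" using tendsto_snd[OF la] by (simp add: xn_def)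
  have lyn: "yn \<longlonglongrightarrow> y" using tendsto_snd[OF lb] by (simp add: yn_def)
  have gn: "\<And>n. good U (xn n) (tn n)" and yneq: "\<And>n. yn n = \<phi> (tn n) (xn n)"
    using R by (auto simp: RR_iff xn_def yn_def tn_def)
  have contG: "continuous_on \<Gamma> (\<lambda>p. \<phi> (fst p) (snd p))"
    using pf_cont by (simp add: case_prod_beta')
  have A: "\<phi> \<tau> x \<in> K" if t0: "0 \<le> \<tau>" "\<tau> < t" "\<tau> \<in> fibre \<Gamma> x" for \<tau>
  proof -
    have ev: "eventually (\<lambda>n. \<tau> < tn n) sequentially"
      using order_tendstoD(1)[OF ltn t0(2)] .
    have ev2: "eventually (\<lambda>n. (\<tau>, xn n) \<in> \<Gamma> \<and> \<phi> \<tau> (xn n) \<in> K) sequentially"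
    proof (rule eventually_mono[OF ev])
      fix n assume "\<tau> < tn n"
      then have "\<tau> \<in> J (tn n)" using t0(1) by (simp add: J_def)
      then have "\<tau> \<in> fibre \<Gamma> (xn n) \<and> \<phi> \<tau> (xn n) \<in> U" using gn[of n] unfolding good_def by blast
      then show "(\<tau>, xn n) \<in> \<Gamma> \<and> \<phi> \<tau> (xn n) \<in> K" using UK by (auto simp: fibre_def)
    qed
    have l1: "(\<lambda>n. (\<tau>, xn n)) \<longlonglongrightarrow> (\<tau>, x)" by (intro tendsto_intros lxn)
    have "(\<lambda>n. \<phi> (fst (\<tau>, xn n)) (snd (\<tau>, xn n))) \<longlonglongrightarrow> \<phi> (fst (\<tau>, x)) (snd (\<tau>, x))"
      by (rule continuous_on_tendsto_compose[OF contG l1])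
         (use t0(3) ev2 in \<open>auto simp: fibre_def elim: eventually_mono\<close>)
    then have l2: "(\<lambda>n. \<phi> \<tau> (xn n)) \<longlonglongrightarrow> \<phi> \<tau> x" by simp
    show ?thesis
      by (rule Lim_in_closed_set[OF clK _ trivial_limit_sequentially l2])
         (use ev2 in \<open>auto elim: eventually_mono\<close>)
  qed
  have B: "{0..t} \<subseteq> fibre \<Gamma> x"
  proof (rule ccontr)
    assume nB: "\<not> {0..t} \<subseteq> fibre \<Gamma> x"
    define D where "D = {0..t} - fibre \<Gamma> x"
    have Dne: "D \<noteq> {}" using nB by (auto simp: D_def)
    have Dbdd: "bdd_below D" by (rule bdd_belowI[of _ 0]) (auto simp: D_def)
    have Dcl: "closed D" unfolding D_def using pf_fopen by (intro closed_Diff) auto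
    define b where "b = Inf D"
    have bD: "b \<in> D" unfolding b_def by (rule closed_contains_Inf[OF Dne Dbdd Dcl])
    have b0: "0 \<le> b" "b \<le> t" "b \<notin> fibre \<Gamma> x" using bD by (auto simp: D_def)
    have below: "\<tau> \<in> fibre \<Gamma> x" if "0 \<le> \<tau>" "\<tau> < b" for \<tau>
    proof (rule ccontr)
      assume "\<tau> \<notin> fibre \<Gamma> x"
      then have "\<tau> \<in> D" using that b0 by (auto simp: D_def)
      then have "b \<le> \<tau>" unfolding b_def by (rule cInf_lower[OF _ Dbdd])
      then show False using that by simp
    qed
    have bpos: "b > 0"
    proof -
      have "b \<noteq> 0" using b0(3) pf_zero by auto
      then show ?thesis using b0(1) by simp
    qed
    obtain \<delta> where d: "\<delta> > 0" "\<And>z. z \<in> K \<Longrightarrow> \<delta> \<in> fibre \<Gamma> z"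
      using uniform_delta[OF cK[folded K_def]] by blast
    define \<tau> where "\<tau> = max 0 (b - \<delta>/2)"
    have tau: "0 \<le> \<tau>" "\<tau> < b" using bpos d(1) by (auto simp: \<tau>_def)
    have taux: "\<tau> \<in> fibre \<Gamma> x" using below tau by blast
    have "\<phi> \<tau> x \<in> K" using A[OF tau(1) _ taux] tau(2) b0(2) by simp
    then have "\<delta> \<in> fibre \<Gamma> (\<phi> \<tau> x)" using d(2) by blast
    then have dt: "\<delta> + \<tau> \<in> fibre \<Gamma> x" using pf_shift_mem[OF taux] by simp
    have "b \<le> \<delta> + \<tau>" using d(1) by (simp add: \<tau>_def)
    then have "b \<in> fibre \<Gamma> x"
      using pf_interval[of x] pf_zero[of x] dt b0(1) unfolding is_interval_1 by blast
    then show False using b0(3) by simp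
  qed
  have tx: "t \<in> fibre \<Gamma> x" using B pos by (auto simp: t_def)
  have C: "\<phi> t x = y"
  proof -
    have l1: "(\<lambda>n. (tn n, xn n)) \<longlonglongrightarrow> (t, x)" by (intro tendsto_intros ltn lxn)
    have "(\<lambda>n. \<phi> (fst (tn n, xn n)) (snd (tn n, xn n))) \<longlonglongrightarrow> \<phi> (fst (t, x)) (snd (t, x))"
      by (rule continuous_on_tendsto_compose[OF contG l1])
         (use tx good_mem(1)[OF gn] in \<open>auto simp: fibre_def\<close>)
    then have "(\<lambda>n. yn n) \<longlonglongrightarrow> \<phi> t x" by (simp add: yneq)
    then show ?thesis using lyn LIMSEQ_unique by blast
  qed
  have allK: "(\<lambda>\<sigma>. \<phi> \<sigma> x) ` {0..t} \<subseteq> closure U"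
  proof
    fix z assume "z \<in> (\<lambda>\<sigma>. \<phi> \<sigma> x) ` {0..t}"
    then obtain \<sigma> where sg: "\<sigma> \<in> {0..t}" "z = \<phi> \<sigma> x" by blast
    show "z \<in> closure U"
    proof (cases "\<sigma> < t")
      case True
      have "\<sigma> \<in> fibre \<Gamma> x" using B sg(1) by (rule subsetD)
      then have "\<phi> \<sigma> x \<in> K" using A[of \<sigma>] sg(1) True by simp
      then show ?thesis using sg(2) by (simp add: K_def)
    next
      case False then have "\<sigma> = t" using sg by simp
      then show ?thesis using sg C yU closure_subset by blast
    qed
  qed
  have segU: "(\<lambda>\<sigma>. \<phi> \<sigma> x) ` {0..t} \<subseteq> U"
    using cvx pos xU B C yU allK unfolding phi_convex_def t_def by blast
  have Jt: "J t = {0..t}" using pos by (simp add: J_def t_def)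
  have "good U x t" unfolding good_def Jt using xU B segU by blast
  then show ?thesis unfolding RR_iff using C yU by (simp add: t_def)
qed

lemma closed_RR:
  assumes oU: "open U" and cvx: "phi_convex \<Gamma> \<phi> U" and cK: "compact (closure U)"
    and la: "a \<longlonglongrightarrow> (r, x)" and lb: "b \<longlonglongrightarrow> (s, y)"
    and xU: "x \<in> U" and yU: "y \<in> U"
    and R: "\<And>n. RR U (a n) (b n)"
  shows "RR U (r, x) (s, y)"
proof (cases "r - s \<ge> 0")
  case True then show ?thesis using closed_RR_pos[OF oU cvx cK la lb xU yU R] by simp
next
  case False
  then have "s - r \<ge> 0" by simp
  moreover have "\<And>n. RR U (b n) (a n)" using R RR_sym by blast
  ultimately have "RR U (s, y) (r, x)" using closed_RR_pos[OF oU cvx cK lb la yU xU] by simp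
  then show ?thesis by (rule RR_sym)
qed

end

context
  fixes \<Gamma> :: "(real \<times> 'a::metric_space) set" and \<phi> :: "real \<Rightarrow> 'a \<Rightarrow> 'a" and U :: "'a set"
  assumes pf: "partial_flow \<Gamma> \<phi>" and oU: "open U"
begin

abbreviation "R \<equiv> env_gen (restr_domain \<Gamma> \<phi> U) \<phi> U"
definition "cls p = Collect (equivclp R p)"
abbreviation "E \<equiv> env_space (restr_domain \<Gamma> \<phi> U) \<phi> U"
abbreviation "S0 \<equiv> (UNIV :: real set) \<times> U"

lemma oS0: "open S0" using oU by (simp add: open_Times)

lemma E_eq: "E = cls ` S0" by (simp add: env_space_def cls_def)

lemma cls_eq: "p \<in> S0 \<Longrightarrow> cls p = {q. R p q}"
  using equivclp_RR[OF pf, of p U] by (auto simp: cls_def mem_Times_iff)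

lemma cls_self: "p \<in> S0 \<Longrightarrow> p \<in> cls p"
  using cls_eq RR_refl[OF pf, of p U] by (auto simp: mem_Times_iff)

lemma cls_sub: "p \<in> S0 \<Longrightarrow> cls p \<subseteq> S0"
  using cls_eq RR_U[OF pf, of U p] by (auto simp: mem_Times_iff)

lemma cls_eq_iff: "p \<in> S0 \<Longrightarrow> q \<in> S0 \<Longrightarrow> cls p = cls q \<longleftrightarrow> R p q"
proof
  assume p: "p \<in> S0" and q: "q \<in> S0"
  { assume "cls p = cls q"
    then have "q \<in> cls p" using cls_self[OF q] by simp
    then show "R p q" using cls_eq[OF p] by simp }
  { assume r: "R p q"
    show "cls p = cls q"
    proof -
      have "R p z \<longleftrightarrow> R q z" for z
        using r RR_sym[OF pf] RR_trans[OF pf] by metis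
      then show ?thesis using cls_eq[OF p] cls_eq[OF q] by simp
    qed }
qed

lemma E_mem: "c \<in> E \<Longrightarrow> z \<in> c \<Longrightarrow> z \<in> S0 \<and> c = cls z"
proof -
  assume c: "c \<in> E" and z: "z \<in> c"
  then obtain p where p: "p \<in> S0" "c = cls p" using E_eq by blast
  then have rz: "R p z" using z cls_eq by simp
  then have zS: "z \<in> S0" using RR_U[OF pf, of U p z] by (simp add: mem_Times_iff)
  then show ?thesis using cls_eq_iff[OF p(1) zS] rz p by simp
qed

definition "PP S \<longleftrightarrow> S \<subseteq> E \<and> open (\<Union>S)"

lemma PP_iff: "(\<lambda>S. S \<subseteq> E \<and> openin (top_of_set S0) (\<Union>S)) = PP"
proof -
  have "\<Union>S \<subseteq> S0" if "S \<subseteq> E" for S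
  proof
    fix z assume "z \<in> \<Union>S"
    then obtain c where "c \<in> S" "z \<in> c" by blast
    then show "z \<in> S0" using E_mem that by blast
  qed
  then show ?thesis unfolding PP_def using openin_open_eq[OF oS0] by (auto intro!: ext)
qed

lemma istop: "istopology PP"
  unfolding istopology_def
proof (intro conjI allI impI)
  fix S T assume S: "PP S" and T: "PP T"
  have "\<Union>(S \<inter> T) = \<Union>S \<inter> \<Union>T"
  proof
    show "\<Union>(S \<inter> T) \<subseteq> \<Union>S \<inter> \<Union>T" by blast
    show "\<Union>S \<inter> \<Union>T \<subseteq> \<Union>(S \<inter> T)"
    proof
      fix z assume "z \<in> \<Union>S \<inter> \<Union>T"
      then obtain c1 c2 where c: "c1 \<in> S" "c2 \<in> T" "z \<in> c1" "z \<in> c2" by blast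
      have "c1 \<in> E" "c2 \<in> E" using c S T by (auto simp: PP_def)
      then have "c1 = cls z" "c2 = cls z" using E_mem c by blast+
      then show "z \<in> \<Union>(S \<inter> T)" using c by blast
    qed
  qed
  then show "PP (S \<inter> T)" using S T by (auto simp: PP_def)
next
  fix K assume K: "\<forall>S\<in>K. PP S"
  have "\<Union>(\<Union>K) = (\<Union>S\<in>K. \<Union>S)" by blast
  moreover have "open (\<Union>S\<in>K. \<Union>S)" using K by (auto simp: PP_def)
  moreover have "\<Union>K \<subseteq> E" using K by (auto simp: PP_def)
  ultimately show "PP (\<Union>K)" by (simp add: PP_def)
qed

abbreviation "TT \<equiv> env_topology (restr_domain \<Gamma> \<phi> U) \<phi> U"

lemma TT_eq: "TT = topology PP"
  unfolding env_topology_def PP_iff ..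

lemma openin_TT: "openin TT S \<longleftrightarrow> PP S"
  unfolding TT_eq using istop by simp

lemma topspace_TT: "topspace TT = E"
proof -
  have "PP E"
  proof -
    have "\<Union>E = S0"
    proof
      show "\<Union>E \<subseteq> S0" using E_mem by blast
      show "S0 \<subseteq> \<Union>E" using E_eq cls_self by blast
    qed
    then show ?thesis using oS0 by (simp add: PP_def)
  qed
  then have "E \<subseteq> topspace TT" using openin_TT openin_subset by blast
  moreover have "topspace TT \<subseteq> E"
    using openin_TT[of "topspace TT"] by (simp add: PP_def)
  ultimately show ?thesis by blast
qed

lemma q_cont: "continuous_map (top_of_set S0) TT cls"
  unfolding continuous_map_def
proof (intro conjI allI impI)
  show "cls \<in> topspace (top_of_set S0) \<rightarrow> topspace TT"
    using E_eq topspace_TT by auto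
  fix S assume "openin TT S"
  then have S: "S \<subseteq> E" "open (\<Union>S)" using openin_TT by (auto simp: PP_def)
  have "{x \<in> topspace (top_of_set S0). cls x \<in> S} = \<Union>S"
  proof
    show "{x \<in> topspace (top_of_set S0). cls x \<in> S} \<subseteq> \<Union>S"
      using cls_self by auto
    show "\<Union>S \<subseteq> {x \<in> topspace (top_of_set S0). cls x \<in> S}"
    proof
      fix z assume "z \<in> \<Union>S"
      then obtain c where c: "c \<in> S" "z \<in> c" by blast
      then have "z \<in> S0 \<and> c = cls z" using E_mem S(1) by blast
      then show "z \<in> {x \<in> topspace (top_of_set S0). cls x \<in> S}" using c by simp
    qed
  qed
  moreover have "\<Union>S \<subseteq> S0" using S(1) E_mem by blast
  ultimately show "openin (top_of_set S0) {x \<in> topspace (top_of_set S0). cls x \<in> S}"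
    using S(2) openin_open_eq[OF oS0] by simp
qed

lemma q_open: "open_map (top_of_set S0) TT cls"
  unfolding open_map_def
proof (intro allI impI)
  fix W assume "openin (top_of_set S0) W"
  then have W: "open W" "W \<subseteq> S0" using openin_open_eq[OF oS0] by auto
  have eqW: "\<And>a. a \<in> W \<Longrightarrow> cls a = {b. R a b}" using W(2) cls_eq by blast
  have "\<Union>(cls ` W) = (\<Union>a\<in>W. {b. R a b})" using eqW by simp
  also have "\<dots> = {b. \<exists>a\<in>W. R a b}" by blast
  finally have "\<Union>(cls ` W) = {b. \<exists>a\<in>W. R a b}" .
  moreover have "open {b. \<exists>a\<in>W. R a b}" by (rule sat_open[OF pf oU W])
  moreover have "cls ` W \<subseteq> E" using W(2) E_eq by auto
  ultimately show "openin TT (cls ` W)" by (simp add: openin_TT PP_def)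
qed

lemma q_surj: "cls ` topspace (top_of_set S0) = topspace TT"
  by (simp add: topspace_TT E_eq)


lemma seq_from_ball:
  fixes a :: "nat \<Rightarrow> 'b::metric_space"
  assumes "\<And>n. dist (a n) p < inverse (real (Suc n))"
  shows "a \<longlonglongrightarrow> p"
proof (rule metric_LIMSEQ_I)
  fix e :: real assume e: "e > 0"
  obtain m where m: "m > 0" "inverse (real m) < e" using ex_inverse_of_nat_less[OF e] by auto
  show "\<exists>N. \<forall>n\<ge>N. dist (a n) p < e"
  proof (intro exI allI impI)
    fix n assume "n \<ge> m"
    then have "inverse (real (Suc n)) \<le> inverse (real m)" using m(1)
      by (intro le_imp_inverse_le) auto
    then show "dist (a n) p < e" using assms[of n] m(2) by linarith
  qed
qed

lemma hausdorff_TT: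
  assumes cvx: "phi_convex \<Gamma> \<phi> U" and cK: "compact (closure U)"
  shows "Hausdorff_space TT"
  unfolding Hausdorff_space_def
proof (intro allI impI)
  fix c1 c2 assume H: "c1 \<in> topspace TT \<and> c2 \<in> topspace TT \<and> c1 \<noteq> c2"
  then obtain p q where pq: "p \<in> S0" "q \<in> S0" "c1 = cls p" "c2 = cls q"
    using topspace_TT E_eq by auto
  have nR: "\<not> R p q" using cls_eq_iff[OF pq(1,2)] pq H by simp
  have "\<exists>\<epsilon>>0. \<forall>a b. a \<in> ball p \<epsilon> \<inter> S0 \<longrightarrow> b \<in> ball q \<epsilon> \<inter> S0 \<longrightarrow> \<not> R a b"
  proof (rule ccontr)
    assume "\<not> ?thesis"
    then have "\<forall>n::nat. \<exists>a b. a \<in> ball p (inverse (real (Suc n))) \<inter> S0 \<and> b \<in> ball q (inverse (real (Suc n))) \<inter> S0 \<and> R a b"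
      by (metis inverse_positive_iff_positive of_nat_0_less_iff zero_less_Suc)
    then obtain a b where ab: "\<And>n. a n \<in> ball p (inverse (real (Suc n))) \<inter> S0"
      "\<And>n. b n \<in> ball q (inverse (real (Suc n))) \<inter> S0" "\<And>n. R (a n) (b n)"
      by metis
    have la: "a \<longlonglongrightarrow> p" using ab(1) by (intro seq_from_ball) (simp add: dist_commute)
    have lb: "b \<longlonglongrightarrow> q" using ab(2) by (intro seq_from_ball) (simp add: dist_commute)
    obtain r x s y where p: "p = (r, x)" and q: "q = (s, y)" by (cases p, cases q) auto
    have "x \<in> U" "y \<in> U" using pq p q by auto
    then have "R (r, x) (s, y)"
      using closed_RR[OF pf oU cvx cK la[unfolded p] lb[unfolded q]] ab(3) by blast
    then show False using nR p q by simp
  qed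
  then obtain \<epsilon> where e: "\<epsilon> > 0" "\<And>a b. a \<in> ball p \<epsilon> \<inter> S0 \<Longrightarrow> b \<in> ball q \<epsilon> \<inter> S0 \<Longrightarrow> \<not> R a b"
    by blast
  define O1 where "O1 = cls ` (ball p \<epsilon> \<inter> S0)"
  define O2 where "O2 = cls ` (ball q \<epsilon> \<inter> S0)"
  have "openin TT O1" unfolding O1_def
    using q_open unfolding open_map_def using openin_open_eq[OF oS0] by (simp add: open_Int oS0)
  moreover have "openin TT O2" unfolding O2_def
    using q_open unfolding open_map_def using openin_open_eq[OF oS0] by (simp add: open_Int oS0)
  moreover have "c1 \<in> O1" unfolding O1_def using pq e(1) by auto
  moreover have "c2 \<in> O2" unfolding O2_def using pq e(1) by auto
  moreover have "disjnt O1 O2"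
    unfolding disjnt_def O1_def O2_def
  proof (rule ccontr)
    assume "cls ` (ball p \<epsilon> \<inter> S0) \<inter> cls ` (ball q \<epsilon> \<inter> S0) \<noteq> {}"
    then obtain a b where a: "a \<in> ball p \<epsilon> \<inter> S0" and b: "b \<in> ball q \<epsilon> \<inter> S0" and eq: "cls a = cls b"
      by blast
    then have "R a b" using cls_eq_iff[of a b] by blast
    then show False using e(2)[OF a b] by simp
  qed
  ultimately show "\<exists>V W. openin TT V \<and> openin TT W \<and> c1 \<in> V \<and> c2 \<in> W \<and> disjnt V W"
    by blast
qed

end

lemma second_countable_S0:
  fixes U :: "'a::metric_space set"
  assumes oU: "open U" and cK: "compact (closure U)"
  shows "second_countable (top_of_set ((UNIV::real set) \<times> U))"
proof -
  define S0 where "S0 = (UNIV::real set) \<times> U"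
  have oS0: "open S0" using oU by (simp add: S0_def open_Times)
  obtain BR :: "real set set" where cBR: "countable BR" and oBR: "\<And>C. C \<in> BR \<Longrightarrow> open C"
    and bBR: "\<And>S. open S \<Longrightarrow> \<exists>V. V \<subseteq> BR \<and> S = \<Union>V"
    using univ_second_countable by blast
  have "\<forall>n::nat. \<exists>k. finite k \<and> closure U \<subseteq> (\<Union>x\<in>k. ball x (inverse (real (Suc n))))"
    using cK unfolding compact_eq_totally_bounded by simp
  then obtain D where D: "\<And>n. finite (D n)"
    "\<And>n. closure U \<subseteq> (\<Union>x\<in>D n. ball x (inverse (real (Suc n))))"
    by metis
  define \<B> where "\<B> = (\<lambda>(A, (n, c)). A \<times> (ball c (inverse (real (Suc n))) \<inter> U)) ` (BR \<times> Sigma UNIV D)"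
  show ?thesis
    unfolding second_countable_def S0_def[symmetric]
  proof (intro exI conjI allI impI ballI)
    show "countable \<B>" unfolding \<B>_def
      using cBR D(1) by (intro countable_image countable_SIGMA) (auto intro: countable_finite)
  next
    fix V assume "V \<in> \<B>"
    then obtain A n c where V: "V = A \<times> (ball c (inverse (real (Suc n))) \<inter> U)" "A \<in> BR"
      unfolding \<B>_def by auto
    have "open V" using V oBR oU by (simp add: open_Times open_Int)
    moreover have "V \<subseteq> S0" using V by (auto simp: S0_def)
    ultimately show "openin (top_of_set S0) V" using openin_open_eq[OF oS0] by simp
  next
    fix W p assume "openin (top_of_set S0) W \<and> p \<in> W"
    then have W: "open W" "W \<subseteq> S0" "p \<in> W" using openin_open_eq[OF oS0] by auto
    obtain r y where p: "p = (r, y)" by (cases p)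
    obtain A B where AB: "open A" "open B" "p \<in> A \<times> B" "A \<times> B \<subseteq> W"
      using open_prod_elim[OF W(1) W(3)] by blast
    have rA: "r \<in> A" and yB: "y \<in> B" using AB(3) p by auto
    have yU: "y \<in> U" using W(2,3) p by (auto simp: S0_def)
    obtain Vs where Vs: "Vs \<subseteq> BR" "A = \<Union>Vs" using bBR[OF AB(1)] by blast
    then obtain A' where A': "A' \<in> BR" "r \<in> A'" "A' \<subseteq> A" using rA by blast
    have "open (B \<inter> U)" using AB(2) oU by (rule open_Int)
    then obtain \<epsilon> where e: "\<epsilon> > 0" "ball y \<epsilon> \<subseteq> B \<inter> U" using yB yU open_contains_ball by blast
    obtain m where m: "m > 0" "inverse (real m) < \<epsilon> / 2"
      using ex_inverse_of_nat_less[of "\<epsilon> / 2"] e(1) by auto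
    define n where "n = m - 1"
    have mn: "real (Suc n) = real m" using m(1) by (simp add: n_def)
    define \<rho> where "\<rho> = inverse (real (Suc n))"
    have rho: "\<rho> < \<epsilon> / 2" using m(2) mn by (simp add: \<rho>_def)
    have "y \<in> closure U" using yU closure_subset by blast
    then obtain c where c: "c \<in> D n" "y \<in> ball c \<rho>" using D(2)[of n] by (auto simp: \<rho>_def)
    have bsub: "ball c \<rho> \<subseteq> ball y \<epsilon>"
    proof
      fix z assume "z \<in> ball c \<rho>"
      then have "dist c z < \<rho>" by simp
      moreover have "dist y c < \<rho>" using c(2) by (simp add: dist_commute)
      ultimately have "dist y z < \<epsilon>" using dist_triangle[of y z c] rho by linarith
      then show "z \<in> ball y \<epsilon>" by simp
    qed
    define V where "V = A' \<times> (ball c \<rho> \<inter> U)"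
    have "V \<in> \<B>" unfolding \<B>_def V_def \<rho>_def
      using A'(1) c(1) by (intro image_eqI[of _ _ "(A', (n, c))"]) auto
    moreover have "p \<in> V" using p A'(2) c(2) yU by (simp add: V_def)
    moreover have "V \<subseteq> W"
    proof -
      have "V \<subseteq> A \<times> B" using A'(3) bsub e(2) by (auto simp: V_def)
      then show ?thesis using AB(4) by blast
    qed
    ultimately show "\<exists>V\<in>\<B>. p \<in> V \<and> V \<subseteq> W" by blast
  qed
qed

lemma locally_compact_S0:
  fixes U :: "'a::metric_space set"
  assumes oU: "open U" and cK: "compact (closure U)"
  shows "locally_compact_space (top_of_set ((UNIV::real set) \<times> U))"
  unfolding locally_compact_space_def
proof
  fix p assume "p \<in> topspace (top_of_set ((UNIV::real set) \<times> U))"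
  then obtain r y where p: "p = (r, y)" "y \<in> U" by auto
  obtain e where e: "e > 0" "ball y e \<subseteq> U" using oU p(2) open_contains_ball by blast
  define V where "V = ball r 1 \<times> ball y (e/2)"
  define C where "C = cball r 1 \<times> cball y (e/2)"
  have cbU: "cball y (e/2) \<subseteq> U"
  proof
    fix z assume "z \<in> cball y (e/2)"
    then have "z \<in> ball y e" using e(1) by simp
    then show "z \<in> U" using e(2) by blast
  qed
  have cc: "compact (cball y (e/2))"
  proof -
    have eq: "cball y (e/2) = closure U \<inter> cball y (e/2)" using cbU closure_subset by blast
    have "compact (closure U \<inter> cball y (e/2))" using cK by (rule compact_Int_closed) simp
    then show ?thesis by (subst eq)
  qed
  show "\<exists>V C. openin (top_of_set ((UNIV::real set) \<times> U)) V \<and> compactin (top_of_set ((UNIV::real set) \<times> U)) C \<and> p \<in> V \<and> V \<subseteq> C"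
  proof (intro exI conjI)
    have "V \<subseteq> UNIV \<times> U" using cbU by (auto simp: V_def)
    then show "openin (top_of_set ((UNIV::real set) \<times> U)) V"
      by (simp add: openin_open_eq open_Times oU V_def)
    have "C \<subseteq> UNIV \<times> U" using cbU by (auto simp: C_def)
    moreover have "compact C" unfolding C_def using cc by (simp add: compact_Times)
    ultimately show "compactin (top_of_set ((UNIV::real set) \<times> U)) C"
      by (simp add: compactin_subtopology)
    show "p \<in> V" using p e(1) by (simp add: V_def)
    show "V \<subseteq> C" by (auto simp: V_def C_def)
  qed
qed


theorem mainTheorem2:
  fixes \<Gamma> :: "(real \<times> 'a::metric_space) set" and \<phi> :: "real \<Rightarrow> 'a \<Rightarrow> 'a" and U :: "'a set"
  assumes "partial_flow \<Gamma> \<phi>"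
    and "open U"
    and "phi_convex \<Gamma> \<phi> U"
    and "compact (closure U)"
  shows "metrizable_space (env_topology (restr_domain \<Gamma> \<phi> U) \<phi> U)"
proof (rule urysohn_metrization)
  note cq = q_cont[OF assms(1,2)] and oq = q_open[OF assms(1,2)] and sq = q_surj[OF assms(1,2)]
  show "second_countable (env_topology (restr_domain \<Gamma> \<phi> U) \<phi> U)"
    by (rule second_countable_open_map_image[OF cq oq sq second_countable_S0[OF assms(2,4)]])
  show hd: "Hausdorff_space (env_topology (restr_domain \<Gamma> \<phi> U) \<phi> U)"
    by (rule hausdorff_TT[OF assms])
  have "locally_compact_space (env_topology (restr_domain \<Gamma> \<phi> U) \<phi> U)"
    by (rule locally_compact_space_continuous_open_map_image[OF cq oq sq locally_compact_S0[OF assms(2,4)]])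
  then show "regular_space (env_topology (restr_domain \<Gamma> \<phi> U) \<phi> U)"
    using hd by (rule locally_compact_Hausdorff_imp_regular_space)
qed

end
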